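(* Let $s>1/2$ and for $w=\sum_{n\in\mathbb Z}w_ne_n\in H^s$ define $$N(w)=\Big(2w_0(\|w\|^2_H-|w_0|^2)+\bar w_0[w,w]\Big)e_0+\sum_{n\ne0}\Big(w_n(2\|w\|^2_H-|w_n|^2-2|w_{-n}|^2)+\bar w_{-n}[w,w]\Big)e_n.$$ Then $[N(w),\bar w]$ is real and $$[N(w),\bar w]\ge \|w\|^4_H.$$
   Context: $e_n(x)=e^{inx}$; $H=L^2_{per}(-\pi,\pi)$ (complex-valued, $2\pi$-periodic) with $\|w\|_H^2=\sum_n|w_n|^2$; $H^s$ is the periodic Sobolev space with $\|w\|_{H^s}^2=\sum_n(|n|^2+1)^s|w_n|^2$. For $w=\sum w_ne_n$, $v=\sum v_ne_n$, $[w,v]:=\sum_{n}w_nv_{-n}$; $\bar w=\sum_n\bar w_{-n}e_n$ is the complex conjugate function (so $[v,\bar w]=\sum_n v_n\bar w_n$ is the $H$-inner product). *)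

theory Defs
  imports "HOL-Analysis.Analysis"
begin

text \<open>A 2pi-periodic function is represented by its Fourier coefficients
  w :: int => complex, i.e. w = sum_n (w n) e_n.\<close>

definition in_Hs :: "real \<Rightarrow> (int \<Rightarrow> complex) \<Rightarrow> bool" where
  "in_Hs s w \<longleftrightarrow> (\<lambda>n. (real_of_int (n^2) + 1) powr s * (cmod (w n))^2) summable_on UNIV"

definition normH_sq :: "(int \<Rightarrow> complex) \<Rightarrow> real" where
  "normH_sq w = (\<Sum>\<^sub>\<infinity>n. (cmod (w n))^2)"

definition bracket :: "(int \<Rightarrow> complex) \<Rightarrow> (int \<Rightarrow> complex) \<Rightarrow> complex" where
  "bracket w v = (\<Sum>\<^sub>\<infinity>n. w n * v (-n))"

definition conjf :: "(int \<Rightarrow> complex) \<Rightarrow> (int \<Rightarrow> complex)" where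
  "conjf w = (\<lambda>n. cnj (w (-n)))"

definition Nop :: "(int \<Rightarrow> complex) \<Rightarrow> (int \<Rightarrow> complex)" where
  "Nop w = (\<lambda>n. if n = 0 then
       2 * w 0 * complex_of_real (normH_sq w - (cmod (w 0))^2) + cnj (w 0) * bracket w w
     else
       w n * complex_of_real (2 * normH_sq w - (cmod (w n))^2 - 2 * (cmod (w (-n)))^2)
         + cnj (w (-n)) * bracket w w)"

end

theory Submission
  imports Defs
begin

lemma prod_infsum:
  fixes f g :: "'a \<Rightarrow> 'b::{banach, real_normed_div_algebra}"
  assumes f: "(\<lambda>x. norm (f x)) summable_on A" and g: "(\<lambda>x. norm (g x)) summable_on B"
  shows "(\<lambda>(x,y). f x * g y) summable_on A \<times> B"
    and "infsum (\<lambda>(x,y). f x * g y) (A \<times> B) = infsum f A * infsum g B"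
proof -
  have h1: "\<forall>x\<in>A. (\<lambda>y. norm (f x * g y)) summable_on B"
    using summable_on_cmult_right[OF g] by (simp add: norm_mult)
  have "(\<lambda>x. norm (f x) * infsum (\<lambda>y. norm (g y)) B) summable_on A"
    using summable_on_cmult_left[OF f] by simp
  then have h2: "(\<lambda>x. norm (infsum (\<lambda>y. norm (f x * g y)) B)) summable_on A"
    by (simp add: norm_mult infsum_cmult_right g infsum_nonneg)
  have "(\<lambda>p. norm ((\<lambda>(x,y). f x * g y) p)) summable_on A \<times> B"
    using h1 h2 Infinite_Sum.abs_summable_on_Sigma_iff[of "\<lambda>(x,y). f x * g y" A "\<lambda>_. B"] by simp
  then show S: "(\<lambda>(x,y). f x * g y) summable_on A \<times> B"
    by (rule abs_summable_summable)
  have gs: "g summable_on B" by (rule abs_summable_summable[OF g])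
  have fs: "f summable_on A" by (rule abs_summable_summable[OF f])
  have "infsum (\<lambda>(x,y). f x * g y) (A \<times> B) = infsum (\<lambda>x. infsum (\<lambda>y. f x * g y) B) A"
    using infsum_Sigma_banach[OF S] by simp
  also have "\<dots> = infsum (\<lambda>x. f x * infsum g B) A"
    by (simp add: infsum_cmult_right gs)
  also have "\<dots> = infsum f A * infsum g B"
    by (simp add: infsum_cmult_left fs)
  finally show "infsum (\<lambda>(x,y). f x * g y) (A \<times> B) = infsum f A * infsum g B" .
qed

lemma bij_neg_int: "bij_betw (uminus :: int \<Rightarrow> int) UNIV UNIV"
  by (rule bij_betw_byWitness[where f'=uminus]) auto

lemma bij_neg_pair: "bij_betw (\<lambda>(n::int,m::int). (-n,-m)) UNIV UNIV"
  by (rule bij_betw_byWitness[where f'="\<lambda>(n,m). (-n,-m)"]) auto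

lemma my_summable_on_diff:
  fixes f g :: "'a \<Rightarrow> 'b::{topological_ab_group_add}"
  assumes "f summable_on A" "g summable_on A"
  shows "(\<lambda>x. f x - g x) summable_on A"
  using summable_on_add[OF assms(1) summable_on_uminus[THEN iffD2, OF assms(2)]] by simp

lemma my_infsum_diff:
  fixes f g :: "'a \<Rightarrow> 'b::{topological_ab_group_add, t2_space}"
  assumes "f summable_on A" "g summable_on A"
  shows "infsum (\<lambda>x. f x - g x) A = infsum f A - infsum g A"
  using infsum_add[OF assms(1) summable_on_uminus[THEN iffD2, OF assms(2)]] by (simp add: infsum_uminus)

theorem lemma2p3:
  fixes s :: real and w :: "int \<Rightarrow> complex"
  assumes "s > 1/2" and "in_Hs s w"
  shows "bracket (Nop w) (conjf w) \<in> \<real> \<and> Re (bracket (Nop w) (conjf w)) \<ge> (normH_sq w)^2"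
proof -
  define a where "a n = (cmod (w n))^2" for n
  define b where "b n = w n * w (-n)" for n
  define S where "S = normH_sq w"
  define B where "B = bracket w w"
  have S_a: "S = infsum a UNIV" unfolding S_def normH_sq_def a_def by simp
  have B_b: "B = infsum b UNIV" unfolding B_def bracket_def b_def by simp
  have a_nn: "0 \<le> a n" for n unfolding a_def by simp
  have a_sum: "a summable_on UNIV"
  proof (rule summable_on_comparison_test)
    show "(\<lambda>n. (real_of_int (n^2) + 1) powr s * (cmod (w n))^2) summable_on UNIV"
      using assms(2) unfolding in_Hs_def .
    fix n :: int
    have "1 \<le> (real_of_int (n^2) + 1) powr s"
      using assms(1) by (intro ge_one_powr_ge_zero) auto
    then have "1 * a n \<le> (real_of_int (n^2) + 1) powr s * a n"
      by (rule mult_right_mono) (rule a_nn)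
    then show "a n \<le> (real_of_int (n^2) + 1) powr s * (cmod (w n))^2"
      unfolding a_def by simp
    show "0 \<le> a n" by (rule a_nn)
  qed
  have a_neg_sum: "(\<lambda>n. a (-n)) summable_on UNIV"
    using summable_on_reindex_bij_betw[OF bij_neg_int, of a] a_sum by simp
  have a_le: "a n \<le> S" for n
  proof -
    have "infsum a {n} \<le> infsum a UNIV"
      by (rule infsum_mono2) (auto simp: a_sum a_nn)
    then show ?thesis by (simp add: S_a)
  qed
  have S_nn: "0 \<le> S" using a_le a_nn order_trans by blast
  have nb: "norm (b n) \<le> (a n + a (-n))/2" for n
  proof -
    have "0 \<le> (cmod (w n) - cmod (w (-n)))^2" by simp
    then show ?thesis unfolding a_def b_def norm_mult by (simp add: power2_eq_square algebra_simps)
  qed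
  have nb_sq: "(norm (b n))^2 = a n * a (-n)" for n
    unfolding a_def b_def norm_mult by (simp add: power_mult_distrib)
  have b_neg: "b (-n) = b n" for n unfolding b_def by simp
  have b_abs: "(\<lambda>n. norm (b n)) summable_on UNIV"
  proof (rule summable_on_comparison_test)
    show "(\<lambda>n. (a n + a (-n)) * (1/2)) summable_on UNIV"
      using summable_on_cmult_left[OF summable_on_add[OF a_sum a_neg_sum], of "1/2"] by simp
  qed (use nb in auto)
  have b_sum: "b summable_on UNIV" by (rule abs_summable_summable[OF b_abs])
  define q where "q n = (a n)^2 + 2*(a n * a (-n)) - (if n = 0 then (a 0)^2 else 0)" for n
  have q_sum: "q summable_on UNIV"
  proof (rule summable_on_comparison_test)
    show "(\<lambda>n. (3*S) * a n) summable_on UNIV" by (rule summable_on_cmult_right[OF a_sum])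
    fix n :: int
    have "a n * a n \<le> S * a n" by (rule mult_right_mono[OF a_le a_nn])
    moreover have "a n * a (-n) \<le> a n * S" by (rule mult_left_mono[OF a_le a_nn])
    ultimately have "a n * a n \<le> S * a n" "a n * a (-n) \<le> S * a n" by (auto simp: mult.commute)
    moreover have "0 \<le> S * a n" using S_nn a_nn[of n] by simp
    ultimately show "q n \<le> 3 * S * a n" unfolding q_def using a_nn[of n] a_nn[of "-n"]
      by (auto simp: power2_eq_square)
    show "0 \<le> q n" unfolding q_def using a_nn[of n] a_nn[of "-n"]
      by (auto simp: power2_eq_square)
  qed
  have Tn: "Nop w n * conjf w (-n) = of_real (2*S*a n - q n) + cnj (b n) * B" for n
  proof -
    have wa: "w k * cnj (w k) = of_real (a k)" for k unfolding a_def by (rule complex_norm_square[symmetric])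
    have wb: "cnj (w (-k)) * cnj (w k) = cnj (b k)" for k unfolding b_def by simp
    show ?thesis
    proof (cases "n = 0")
      case True
      have "Nop w n * conjf w (-n) = 2 * (w 0 * cnj (w 0)) * of_real (S - a 0) + cnj (w 0) * cnj (w 0) * B"
        using True by (simp add: Nop_def conjf_def S_def B_def a_def algebra_simps)
      also have "\<dots> = of_real (2*S*a n - q n) + cnj (b n) * B"
        using True wa[of 0] wb[of 0] by (simp add: q_def algebra_simps power2_eq_square)
      finally show ?thesis .
    next
      case False
      have "Nop w n * conjf w (-n) = (w n * cnj (w n)) * of_real (2 * S - a n - 2 * a (-n)) + cnj (w (-n)) * cnj (w n) * B"
        using False by (simp add: Nop_def conjf_def S_def B_def a_def algebra_simps)
      also have "\<dots> = of_real (2*S*a n - q n) + cnj (b n) * B"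
        using False wa[of n] wb[of n] by (simp add: q_def algebra_simps power2_eq_square)
      finally show ?thesis .
    qed
  qed
  have r_sum: "(\<lambda>n. 2*S*a n - q n) summable_on UNIV"
    using my_summable_on_diff[OF summable_on_cmult_right[OF a_sum, of "2*S"] q_sum] by simp
  have cb_sum: "(\<lambda>n. cnj (b n) * B) summable_on UNIV"
    by (rule summable_on_cmult_left) (simp add: b_sum)
  have rS: "infsum (\<lambda>n. 2*S*a n - q n) UNIV = 2*S*S - infsum q UNIV"
    using my_infsum_diff[OF summable_on_cmult_right[OF a_sum, of "2*S"] q_sum]
    by (simp add: infsum_cmult_right[OF a_sum] S_a)
  have main_eq: "bracket (Nop w) (conjf w) = of_real (2*S*S - infsum q UNIV + (cmod B)^2)"
  proof -
    have "bracket (Nop w) (conjf w) = infsum (\<lambda>n. of_real (2*S*a n - q n) + cnj (b n) * B) UNIV"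
      unfolding bracket_def using Tn by simp
    also have "\<dots> = infsum (\<lambda>n. of_real (2*S*a n - q n)) UNIV + infsum (\<lambda>n. cnj (b n) * B) UNIV"
      by (rule infsum_add[OF summable_on_of_real[OF r_sum] cb_sum])
    also have "infsum (\<lambda>n. cnj (b n) * B) UNIV = cnj B * B"
      by (simp add: infsum_cmult_left b_sum B_b)
    also have "infsum (\<lambda>n. of_real (2*S*a n - q n) :: complex) UNIV = of_real (2*S*S - infsum q UNIV)"
      using infsumI[OF has_sum_of_real[OF has_sum_infsum[OF r_sum]]] rS
      by (simp add: )
    also have "cnj B * B = of_real ((cmod B)^2)" by (subst complex_norm_square) (rule mult.commute)
    finally show ?thesis by simp
  qed
  define F1 where "F1 = (\<lambda>(n::int,m::int). a n * a m)"
  define F2 where "F2 = (\<lambda>(n::int,m::int). b n * cnj (b m))"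
  define F where "F p = F1 p + Re (F2 p)" for p
  have an: "(\<lambda>n. norm (a n)) summable_on UNIV" using a_sum a_nn by simp
  have cbn: "(\<lambda>n. norm (cnj (b n))) summable_on UNIV" using b_abs by simp
  have F1s: "F1 summable_on UNIV" and F1v: "infsum F1 UNIV = S * S"
    using prod_infsum[OF an an] by (simp_all add: F1_def S_a)
  have F2s: "F2 summable_on UNIV" and F2v: "infsum F2 UNIV = B * cnj B"
    using prod_infsum[OF b_abs cbn] by (simp_all add: F2_def B_b)
  have Fs: "F summable_on UNIV"
    unfolding F_def by (rule summable_on_add[OF F1s summable_on_Re[OF F2s]])
  have Fv: "infsum F UNIV = S*S + (cmod B)^2"
  proof -
    have "infsum F UNIV = infsum F1 UNIV + infsum (\<lambda>p. Re (F2 p)) UNIV"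
      unfolding F_def by (rule infsum_add[OF F1s summable_on_Re[OF F2s]])
    also have "infsum (\<lambda>p. Re (F2 p)) UNIV = Re (B * cnj B)"
      using infsum_Re[OF F2s] F2v by simp
    also have "Re (B * cnj B) = (cmod B)^2"
      using complex_norm_square[of B] by (metis Re_complex_of_real)
    finally show ?thesis using F1v by simp
  qed
  define G where "G p = (F p + F (- fst p, - snd p)) / 2" for p
  have Fneg_s: "(\<lambda>p. F (- fst p, - snd p)) summable_on UNIV"
    using summable_on_reindex_bij_betw[OF bij_neg_pair, of F] Fs by (simp add: case_prod_beta)
  have Fneg_v: "infsum (\<lambda>p. F (- fst p, - snd p)) UNIV = infsum F UNIV"
    using infsum_reindex_bij_betw[OF bij_neg_pair, of F] by (simp add: case_prod_beta)
  have Geq: "G = (\<lambda>x. (F x + F (- fst x, - snd x)) * (1/2))" by (simp add: G_def fun_eq_iff)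
  have Gs: "G summable_on UNIV"
    unfolding Geq by (rule summable_on_cmult_left[OF summable_on_add[OF Fs Fneg_s]])
  have Gv: "infsum G UNIV = S*S + (cmod B)^2"
  proof -
    have "infsum G UNIV = infsum (\<lambda>p. (F p + F (- fst p, - snd p)) * (1/2)) UNIV"
      by (simp add: Geq)
    also have "\<dots> = infsum (\<lambda>p. F p + F (- fst p, - snd p)) UNIV * (1/2)"
      by (rule infsum_cmult_left) (rule summable_on_add[OF Fs Fneg_s])
    also have "\<dots> = (infsum F UNIV + infsum F UNIV) * (1/2)"
      by (simp only: infsum_add[OF Fs Fneg_s] Fneg_v)
    finally show ?thesis using Fv by simp
  qed
  have Fnm: "F (n,m) + F (-n,-m) = a n * a m + a (-n) * a (-m) + 2 * Re (b n * cnj (b m))" for n m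
    by (simp add: F_def F1_def F2_def b_neg)
  have G_nn: "0 \<le> G p" for p
  proof -
    obtain n m where p: "p = (n,m)" by (cases p)
    have "- Re (b n * cnj (b m)) \<le> cmod (b n * cnj (b m))"
      using abs_Re_le_cmod[of "b n * cnj (b m)"] by linarith
    also have "\<dots> = cmod (w n) * cmod (w m) * (cmod (w (-n)) * cmod (w (-m)))"
      by (simp add: b_def norm_mult)
    finally have 1: "- Re (b n * cnj (b m)) \<le> cmod (w n) * cmod (w m) * (cmod (w (-n)) * cmod (w (-m)))" .
    have 2: "0 \<le> (cmod (w n) * cmod (w m) - cmod (w (-n)) * cmod (w (-m)))^2" by simp
    have "a n * a m + a (-n) * a (-m) = (cmod (w n) * cmod (w m))^2 + (cmod (w (-n)) * cmod (w (-m)))^2"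
      by (simp add: a_def power_mult_distrib)
    then have "0 \<le> F (n,m) + F (-n,-m)"
      using 1 2 Fnm[of n m] by (simp add: power2_diff)
    then show ?thesis by (simp add: G_def p)
  qed
  have Gdiag: "G (n,n) = ((a n)^2 + (a (-n))^2)/2 + a n * a (-n)" for n
  proof -
    have "Re (b n * cnj (b n)) = a n * a (-n)"
      using complex_norm_square[of "b n"] nb_sq[of n] by (metis Re_complex_of_real)
    then show ?thesis using Fnm[of n n] by (simp add: G_def power2_eq_square mult.commute)
  qed
  have Ganti: "G (n,-n) = 2 * (a n * a (-n))" for n
  proof -
    have "Re (b n * cnj (b (-n))) = a n * a (-n)"
      using complex_norm_square[of "b n"] nb_sq[of n] b_neg[of n] by (metis Re_complex_of_real)
    then show ?thesis using Fnm[of n "-n"] by (simp add: G_def mult.commute)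
  qed
  define D1 where "D1 = range (\<lambda>n::int. (n,n))"
  define D2 where "D2 = (\<lambda>n::int. (n,-n)) ` (UNIV - {0})"
  have disj: "D1 \<inter> D2 = {}" unfolding D1_def D2_def by auto
  have GD1: "G summable_on D1" by (rule summable_on_subset[OF Gs]) simp
  have GD2: "G summable_on D2" by (rule summable_on_subset[OF Gs]) simp
  have inj1: "inj_on (\<lambda>n::int. (n,n)) UNIV" by (auto simp: inj_on_def)
  have inj2: "inj_on (\<lambda>n::int. (n,-n)) (UNIV - {0})" by (auto simp: inj_on_def)
  define R1 where "R1 n = G (n,n)" for n
  define R2 where "R2 n = (if n = 0 then 0 else G (n,-n))" for n
  have R1eq: "R1 = (\<lambda>n. G (n,n))" by (simp add: R1_def fun_eq_iff)
  have R1s: "R1 summable_on UNIV" and R1v: "infsum R1 UNIV = infsum G D1"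
    using GD1 summable_on_reindex[OF inj1, of G] infsum_reindex[OF inj1, of G]
    by (simp_all add: D1_def R1eq o_def)
  have R2s': "(\<lambda>n. G (n,-n)) summable_on (UNIV - {0})"
    and R2v': "infsum (\<lambda>n. G (n,-n)) (UNIV - {0}) = infsum G D2"
    using GD2 summable_on_reindex[OF inj2, of G] infsum_reindex[OF inj2, of G]
    by (simp_all add: D2_def o_def)
  have R2s: "R2 summable_on UNIV"
    using R2s' by (subst summable_on_cong_neutral[where T="UNIV - {0}" and g="\<lambda>n. G (n,-n)"]) (auto simp: R2_def)
  have R2v: "infsum R2 UNIV = infsum G D2"
    using R2v' by (subst infsum_cong_neutral[where T="UNIV - {0}" and g="\<lambda>n. G (n,-n)"]) (auto simp: R2_def)
  have "infsum R1 UNIV + infsum R2 UNIV = infsum G (D1 \<union> D2)"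
    using R1v R2v infsum_Un_disjoint[OF GD1 GD2 disj] by simp
  also have "\<dots> \<le> infsum G UNIV"
    by (rule infsum_mono2[OF summable_on_subset[OF Gs] Gs]) (auto simp: G_nn)
  finally have Rle: "infsum (\<lambda>n. R1 n + R2 n) UNIV \<le> S*S + (cmod B)^2"
    using infsum_add[OF R1s R2s] Gv by simp
  have qneg_s: "(\<lambda>n. q (-n)) summable_on UNIV"
    using summable_on_reindex_bij_betw[OF bij_neg_int, of q] q_sum by simp
  have qneg_v: "infsum (\<lambda>n. q (-n)) UNIV = infsum q UNIV"
    using infsum_reindex_bij_betw[OF bij_neg_int, of q] by simp
  have qsym_s: "(\<lambda>n. (q n + q (-n)) * (1/2)) summable_on UNIV"
    by (rule summable_on_cmult_left[OF summable_on_add[OF q_sum qneg_s]])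
  have qsym_v: "infsum (\<lambda>n. (q n + q (-n)) * (1/2)) UNIV = infsum q UNIV"
  proof -
    have "infsum (\<lambda>n. (q n + q (-n)) * (1/2)) UNIV = infsum (\<lambda>n. q n + q (-n)) UNIV * (1/2)"
      by (rule infsum_cmult_left) (rule summable_on_add[OF q_sum qneg_s])
    also have "\<dots> = (infsum q UNIV + infsum q UNIV) * (1/2)"
      by (simp only: infsum_add[OF q_sum qneg_s] qneg_v)
    finally show ?thesis by simp
  qed
  have pt: "(q n + q (-n)) * (1/2) \<le> R1 n + R2 n" for n
  proof (cases "n = 0")
    case True
    then show ?thesis by (simp add: q_def R1_def R2_def Gdiag power2_eq_square)
  next
    case False
    have "0 \<le> a n * a (-n)" using a_nn by simp
    then show ?thesis using False by (simp add: q_def R1_def R2_def Gdiag Ganti power2_eq_square field_simps)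
  qed
  have "infsum q UNIV \<le> S*S + (cmod B)^2"
    using infsum_mono[OF qsym_s summable_on_add[OF R1s R2s] pt] qsym_v Rle by simp
  then have "(normH_sq w)^2 \<le> 2*S*S - infsum q UNIV + (cmod B)^2"
    by (simp add: S_def power2_eq_square)
  moreover have "bracket (Nop w) (conjf w) \<in> \<real>" using main_eq by simp
  ultimately show ?thesis using main_eq by simp
qed

end
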